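(* With notation as in the context, there exist cellular 2-cocycles $\psi_0\in C^2(Z_0;\mathbf{Z})$ and $\psi_1\in C^2(Z_1;\mathbf{Z})$, each invariant under translations by the lattice $\Gamma=(2\mathbf{Z})^4\oplus\langle u\rangle$, such that $\langle\psi_i,[J]\rangle=\pm1$ for every jailcell $J\subset Z_i$ ($i=0,1$), and $\psi_1(\tau(c))=\psi_0(c)$ for every 2-cell $c$ of $Z_0$.
   Context: Give $\mathbf{R}^5$ the product cubical cell structure with integer vertices; $Z_0$ is its 2-skeleton (a cubical 2-complex whose 2-cells are unit squares), $u=e_1+\dots+e_5$, $\tau:\mathbf{R}^5\to\mathbf{R}^5$ is the translation $\tau(x)=x+u/2$, and $Z_1=\tau(Z_0)$ with the translated cell structure. A jailcell in $Z_0$ (resp. $Z_1$) is the boundary of a unit 3-cube of the cubical structure of $\mathbf{R}^5$ (resp. of its translate by $u/2$), regarded as an oriented cellular 2-cycle in $Z_0$ (resp. $Z_1$). *)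

theory Defs
  imports "HOL-Analysis.Analysis"
begin

text \<open>Points of R^5 are vectors of type real^5; coordinates are indexed by the
  numeral type 5 (elements 0,1,2,3,4, linearly ordered), so coordinate e_m of the
  paper is index m-1.\<close>

definition intpts :: "(real^5) set" where
  "intpts = {x. \<forall>m. x $ m \<in> \<int>}"

definition uvec :: "real^5" where
  "uvec = (\<chi> m. 1)"

definition tau :: "real^5 \<Rightarrow> real^5" where
  "tau x = x + (1/2) *\<^sub>R uvec"

definition Gamma :: "(real^5) set" where
  "Gamma = {g. \<exists>(a :: 5 \<Rightarrow> int) (n :: int). a 4 = 0 \<and>
               g = (\<chi> m. 2 * of_int (a m)) + of_int n *\<^sub>R uvec}"

text \<open>An oriented 2-cell (v,i,j), i<j, is the unit square
  v + [0,1] e_i + [0,1] e_j oriented by (e_i, e_j).  A cellular 2-cochain with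
  integer coefficients is a function on such cells.\<close>
type_synonym cell2 = "(real^5) \<times> 5 \<times> 5"

definition square :: "cell2 \<Rightarrow> (real^5) set" where
  "square c = (case c of (v,i,j) \<Rightarrow>
     ({v + s *\<^sub>R axis i 1 + t *\<^sub>R axis j 1 | s t. 0 \<le> s \<and> s \<le> 1 \<and> 0 \<le> t \<and> t \<le> 1}))"

definition cells0 :: "cell2 set" where
  "cells0 = {(v,i,j). v \<in> intpts \<and> i < j}"

definition tau_cell :: "cell2 \<Rightarrow> cell2" where
  "tau_cell c = (case c of (v,i,j) \<Rightarrow> (tau v, i, j))"

definition cells1 :: "cell2 set" where
  "cells1 = tau_cell ` cells0"

definition translate_cell :: "real^5 \<Rightarrow> cell2 \<Rightarrow> cell2" where
  "translate_cell g c = (case c of (v,i,j) \<Rightarrow> (v + g, i, j))"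

text \<open>A unit 3-cube (v,i,j,k), i<j<k; its boundary as an oriented cellular
  2-chain, listed as (coefficient, oriented 2-cell) pairs (standard cubical
  boundary).\<close>
type_synonym cube3 = "(real^5) \<times> 5 \<times> 5 \<times> 5"

definition cubes0 :: "cube3 set" where
  "cubes0 = {(v,i,j,k). v \<in> intpts \<and> i < j \<and> j < k}"

definition cubes1 :: "cube3 set" where
  "cubes1 = (\<lambda>(v,i,j,k). (tau v, i, j, k)) ` cubes0"

definition jailcell :: "cube3 \<Rightarrow> (int \<times> cell2) list" where
  "jailcell q = (case q of (v,i,j,k) \<Rightarrow>
     [( 1, (v + axis i 1, j, k)), (-1, (v, j, k)),
      (-1, (v + axis j 1, i, k)), ( 1, (v, i, k)),
      ( 1, (v + axis k 1, i, j)), (-1, (v, i, j))])"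

definition pairing :: "(cell2 \<Rightarrow> int) \<Rightarrow> (int \<times> cell2) list \<Rightarrow> int" where
  "pairing \<psi> z = sum_list (map (\<lambda>(s,c). s * \<psi> c) z)"

end

theory Submission imports Defs begin

definition P :: "real \<Rightarrow> int" where "P x = \<lfloor>x\<rfloor> mod 2"
definition Q :: "real^5 \<Rightarrow> 5 \<Rightarrow> int" where "Q v m = P (v $ m - v $ 4)"

lemma P01: "P x = 0 \<or> P x = 1" unfolding P_def by auto
lemma P1: "P (x + 1) = 1 - P x" unfolding P_def by (simp add: mod_simps) presburger
lemma Pm1: "P (x - 1) = 1 - P x" using P1[of "x - 1"] by simp
lemma P2: "P (x + 2 * of_int k) = P x"
proof -
  have "\<lfloor>x + 2 * of_int k\<rfloor> = \<lfloor>x\<rfloor> + 2 * k"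
    by (metis floor_add_int of_int_mult of_int_numeral)
  thus ?thesis unfolding P_def by simp
qed

lemma Q01: "Q v m = 0 \<or> Q v m = 1" unfolding Q_def using P01 by blast

lemma Qa: "m \<noteq> 4 \<Longrightarrow> Q (v + axis i 1) m = (if i = m \<or> i = 4 then 1 - Q v m else Q v m)"
  unfolding Q_def by (auto simp: axis_def P1 Pm1 algebra_simps P1[of "v$m - v$4", simplified algebra_simps]
     Pm1[of "v$m - v$4", simplified algebra_simps])

lemma QG: "m \<noteq> 4 \<Longrightarrow> g \<in> Gamma \<Longrightarrow> Q (v + g) m = Q v m"
proof -
  assume m: "m \<noteq> 4" and "g \<in> Gamma"
  then obtain a :: "5 \<Rightarrow> int" and n :: int where a4: "a 4 = 0" and
    g: "g = (\<chi> m. 2 * of_int (a m)) + of_int n *\<^sub>R uvec" unfolding Gamma_def by blast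
  have eq: "(v + g) $ m - (v + g) $ 4 = (v $ m - v $ 4) + 2 * of_int (a m)"
    using a4 by (simp add: g uvec_def)
  show ?thesis unfolding Q_def eq by (rule P2)
qed

lemma Qtau: "Q (tau v) m = Q v m"
  unfolding Q_def tau_def uvec_def by simp

definition psi :: "cell2 \<Rightarrow> int" where
  "psi c = (case c of (v,i,j) \<Rightarrow>
     if (i,j) = (0,1) then Q v 2 else
     if (i,j) = (0,3) then Q v 1 else
     if (i,j) = (2,3) then Q v 0 else
     if (i,j) = (1,2) then Q v 3 else
     if (i,j) = (0,4) then Q v 2 else
     if (i,j) = (1,4) then Q v 3 else 0)"

lemma ex5: "(x::5) = 0 \<or> x = 1 \<or> x = 2 \<or> x = 3 \<or> x = 4"
proof (cases x)
  case (of_int z)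
  then have "z = 0 \<or> z = 1 \<or> z = 2 \<or> z = 3 \<or> z = 4" by auto
  then show ?thesis using of_int by auto
qed

lemma triples: "(i::5) < j \<Longrightarrow> j < k \<Longrightarrow> (i,j,k) \<in> {(0,1,2),(0,1,3),(0,1,4),(0,2,3),(0,2,4),(0,3,4),(1,2,3),(1,2,4),(1,3,4),(2,3,4)}"
  using ex5[of i] ex5[of j] ex5[of k]
  apply (elim disjE)
  by (simp_all add: less_bit1_def bit1.Rep_numeral bit1.Rep_0 bit1.Rep_1)

lemma jail: "(i::5) < j \<Longrightarrow> j < k \<Longrightarrow> pairing psi (jailcell (v,i,j,k)) \<in> {1,-1}"
  apply (drule (1) triples)
  apply (elim insertE emptyE)
  apply (simp_all add: pairing_def jailcell_def psi_def Qa)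
  using Q01 by (metis disj_commute)+

lemma psiG: "g \<in> Gamma \<Longrightarrow> psi (translate_cell g c) = psi c"
  by (cases c) (simp add: translate_cell_def psi_def QG)

lemma psitau: "psi (tau_cell c) = psi c"
  by (cases c) (simp add: tau_cell_def psi_def Qtau)

theorem propositionA5:
  shows "\<exists>\<psi>0 \<psi>1 :: cell2 \<Rightarrow> int.
     (\<forall>c\<in>cells0. \<forall>g\<in>Gamma. \<psi>0 (translate_cell g c) = \<psi>0 c) \<and>
     (\<forall>c\<in>cells1. \<forall>g\<in>Gamma. \<psi>1 (translate_cell g c) = \<psi>1 c) \<and>
     (\<forall>q\<in>cubes0. pairing \<psi>0 (jailcell q) \<in> {1, -1}) \<and>
     (\<forall>q\<in>cubes1. pairing \<psi>1 (jailcell q) \<in> {1, -1}) \<and>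
     (\<forall>c\<in>cells0. \<psi>1 (tau_cell c) = \<psi>0 c)"
proof (intro exI[of _ psi] conjI ballI)
  fix q assume "q \<in> cubes0"
  then obtain v i j k where "q = (v,i,j,k)" "i < j" "j < k" unfolding cubes0_def by auto
  then show "pairing psi (jailcell q) \<in> {1, -1}" using jail by simp
next
  fix q assume "q \<in> cubes1"
  then obtain v i j k where "q = (tau v,i,j,k)" "i < j" "j < k" unfolding cubes1_def cubes0_def by auto
  then show "pairing psi (jailcell q) \<in> {1, -1}" using jail by simp
qed (simp_all add: psiG psitau)


end
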